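(* For $n\ge2$, the natural homomorphism from the abstract commensurator $\operatorname{Com}(\mathcal{H}_n)$ to the quasi-isometry group $\operatorname{QI}(\mathcal{H}_n)$ is injective.
   Context: Let $\mathbb{N}=\{1,2,3,\dots\}$, $\mathbb{Z}_n$ the integers modulo $n$, $R_n=\mathbb{Z}_n\times\mathbb{N}$. The Houghton group $\mathcal{H}_n$ is the group of permutations $\sigma$ of $R_n$ for which there exist $N\ge0$ and integers $t_i$ with $(i,k)\sigma=(i,k+t_i)$ for all $i\in\mathbb{Z}_n$, $k\ge N$ (right actions); it is finitely generated for $n\ge2$ and is given a word metric. A commensuration of a group $G$ is an isomorphism $\phi:A\to B$ between finite-index subgroups of $G$; two are equivalent if they agree on a finite-index subgroup; $\operatorname{Com}(G)$ is the group of equivalence classes. $\operatorname{QI}(G)$ is the group of quasi-isometries $G\to G$ modulo those at bounded distance from each other. A commensuration $\phi:A\to B$ is a quasi-isometry of $G$ (since $A,B$ are quasi-isometric to $G$ via inclusion), giving the natural homomorphism $\operatorname{Com}(G)\to\operatorname{QI}(G)$. *)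

theory Defs
  imports "HOL-Algebra.Algebra"
begin

text \<open>R_n = Z_n x N, with Z_n represented by {0..<n} and N = {1,2,...}.\<close>
definition Rn :: "nat \<Rightarrow> (nat \<times> nat) set" where
  "Rn n = {(i, k). i < n \<and> 1 \<le> k}"

definition houghton_carrier :: "nat \<Rightarrow> ((nat \<times> nat) \<Rightarrow> (nat \<times> nat)) set" where
  "houghton_carrier n =
     {\<sigma>. bij_betw \<sigma> (Rn n) (Rn n) \<and> (\<forall>x. x \<notin> Rn n \<longrightarrow> \<sigma> x = x) \<and>
          (\<exists>(N::nat) (t::nat \<Rightarrow> int). \<forall>i<n. \<forall>k. N \<le> k \<and> 1 \<le> k \<longrightarrow>
              fst (\<sigma> (i, k)) = i \<and> int (snd (\<sigma> (i, k))) = int k + t i)}"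

text \<open>Right actions: (x)(sigma tau) = ((x)sigma)tau, i.e. the product sigma tau is tau o sigma.\<close>
definition houghton :: "nat \<Rightarrow> ((nat \<times> nat) \<Rightarrow> (nat \<times> nat)) monoid" where
  "houghton n = \<lparr>carrier = houghton_carrier n, monoid.mult = (\<lambda>\<sigma> \<tau>. \<tau> \<circ> \<sigma>), monoid.one = id\<rparr>"

definition word_len :: "('a, 'b) monoid_scheme \<Rightarrow> 'a set \<Rightarrow> 'a \<Rightarrow> nat" where
  "word_len G S g = (LEAST k. \<exists>xs. length xs = k \<and> set xs \<subseteq> S \<union> m_inv G ` S \<and>
                               foldr (monoid.mult G) xs (monoid.one G) = g)"

definition word_dist :: "('a, 'b) monoid_scheme \<Rightarrow> 'a set \<Rightarrow> 'a \<Rightarrow> 'a \<Rightarrow> nat" where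
  "word_dist G S g h = word_len G S (monoid.mult G (m_inv G g) h)"

definition finite_index :: "('a, 'b) monoid_scheme \<Rightarrow> 'a set \<Rightarrow> bool" where
  "finite_index G A \<longleftrightarrow> subgroup A G \<and> finite (rcosets\<^bsub>G\<^esub> A)"

definition commensuration ::
    "('a, 'b) monoid_scheme \<Rightarrow> 'a set \<Rightarrow> 'a set \<Rightarrow> ('a \<Rightarrow> 'a) \<Rightarrow> bool" where
  "commensuration G A B \<phi> \<longleftrightarrow> finite_index G A \<and> finite_index G B \<and>
     \<phi> \<in> iso (G\<lparr>carrier := A\<rparr>) (G\<lparr>carrier := B\<rparr>)"

definition comm_equiv ::
    "('a, 'b) monoid_scheme \<Rightarrow> 'a set \<Rightarrow> ('a \<Rightarrow> 'a) \<Rightarrow> 'a set \<Rightarrow> ('a \<Rightarrow> 'a) \<Rightarrow> bool" where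
  "comm_equiv G A \<phi> A' \<psi> \<longleftrightarrow>
     (\<exists>C. finite_index G C \<and> C \<subseteq> A \<and> C \<subseteq> A' \<and> (\<forall>g\<in>C. \<phi> g = \<psi> g))"

text \<open>A closest point of A to g in the word metric (a coarse inverse of the inclusion A -> G).\<close>
definition nearest :: "('a, 'b) monoid_scheme \<Rightarrow> 'a set \<Rightarrow> 'a set \<Rightarrow> 'a \<Rightarrow> 'a" where
  "nearest G S A g = (SOME a. a \<in> A \<and> (\<forall>b\<in>A. word_dist G S g a \<le> word_dist G S g b))"

definition comm_qi :: "('a, 'b) monoid_scheme \<Rightarrow> 'a set \<Rightarrow> 'a set \<Rightarrow> ('a \<Rightarrow> 'a) \<Rightarrow> 'a \<Rightarrow> 'a" where
  "comm_qi G S A \<phi> = (\<lambda>g. \<phi> (nearest G S A g))"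

text \<open>Two maps G -> G at bounded distance (same class in QI(G)).\<close>
definition bounded_distance ::
    "('a, 'b) monoid_scheme \<Rightarrow> 'a set \<Rightarrow> ('a \<Rightarrow> 'a) \<Rightarrow> ('a \<Rightarrow> 'a) \<Rightarrow> bool" where
  "bounded_distance G S f f' \<longleftrightarrow> (\<exists>C::nat. \<forall>g\<in>carrier G. word_dist G S (f g) (f' g) \<le> C)"

end

theory Submission
  imports Defs
begin


lemma hc_iff: "\<sigma> \<in> houghton_carrier n \<longleftrightarrow> bij_betw \<sigma> (Rn n) (Rn n) \<and> (\<forall>x. x \<notin> Rn n \<longrightarrow> \<sigma> x = x) \<and>
          (\<exists>(N::nat) (t::nat \<Rightarrow> int). \<forall>i<n. \<forall>k. N \<le> k \<and> 1 \<le> k \<longrightarrow>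
              fst (\<sigma> (i, k)) = i \<and> int (snd (\<sigma> (i, k))) = int k + t i)"
  by (simp add: houghton_carrier_def)

lemma Rn_iff[simp]: "(i,k) \<in> Rn n \<longleftrightarrow> i < n \<and> 1 \<le> k"
  by (simp add: Rn_def)

lemma bound_le_sum: "(i::nat) < n \<Longrightarrow> nat \<bar>t i\<bar> \<le> (\<Sum>j<n. nat \<bar>t j\<bar>)"
  by (rule member_le_sum) auto

lemma hc_comp:
  assumes s: "\<sigma> \<in> houghton_carrier n" and t: "\<tau> \<in> houghton_carrier n"
  shows "\<tau> \<circ> \<sigma> \<in> houghton_carrier n"
proof -
  from s obtain N1 t1 where bs: "bij_betw \<sigma> (Rn n) (Rn n)" and os: "\<forall>x. x \<notin> Rn n \<longrightarrow> \<sigma> x = x"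
    and es: "\<forall>i<n. \<forall>k. N1 \<le> k \<and> 1 \<le> k \<longrightarrow> fst (\<sigma> (i, k)) = i \<and> int (snd (\<sigma> (i, k))) = int k + t1 i"
    unfolding hc_iff by blast
  from t obtain N2 t2 where bt: "bij_betw \<tau> (Rn n) (Rn n)" and ot: "\<forall>x. x \<notin> Rn n \<longrightarrow> \<tau> x = x"
    and et: "\<forall>i<n. \<forall>k. N2 \<le> k \<and> 1 \<le> k \<longrightarrow> fst (\<tau> (i, k)) = i \<and> int (snd (\<tau> (i, k))) = int k + t2 i"
    unfolding hc_iff by blast
  define M where "M = N1 + N2 + (\<Sum>j<n. nat \<bar>t1 j\<bar>)"
  have "\<forall>i<n. \<forall>k. M \<le> k \<and> 1 \<le> k \<longrightarrow> fst ((\<tau> \<circ> \<sigma>) (i, k)) = i \<and> int (snd ((\<tau> \<circ> \<sigma>) (i, k))) = int k + (t1 i + t2 i)"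
  proof (intro allI impI)
    fix i k assume i: "i < n" and k: "M \<le> k \<and> 1 \<le> k"
    have b: "nat \<bar>t1 i\<bar> \<le> (\<Sum>j<n. nat \<bar>t1 j\<bar>)" using bound_le_sum i .
    obtain a b where ab: "\<sigma> (i,k) = (a,b)" by fastforce
    have e1: "a = i" "int b = int k + t1 i" using es i k ab unfolding M_def by (metis add_leD1 fst_conv snd_conv)+
    have "(i,k) \<in> Rn n" using i k by simp
    hence "(a,b) \<in> Rn n" using bs ab bij_betwE by metis
    hence "1 \<le> b" by simp
    moreover have "N2 \<le> b" using e1 b k unfolding M_def by linarith
    ultimately have "fst (\<tau> (i, b)) = i \<and> int (snd (\<tau> (i, b))) = int b + t2 i" using et i by blast
    thus "fst ((\<tau> \<circ> \<sigma>) (i, k)) = i \<and> int (snd ((\<tau> \<circ> \<sigma>) (i, k))) = int k + (t1 i + t2 i)"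
      using ab e1 by simp
  qed
  moreover have "bij_betw (\<tau> \<circ> \<sigma>) (Rn n) (Rn n)" using bs bt bij_betw_trans by blast
  moreover have "\<forall>x. x \<notin> Rn n \<longrightarrow> (\<tau> \<circ> \<sigma>) x = x" using os ot by simp
  ultimately show ?thesis unfolding hc_iff
    by (intro conjI exI[of _ M] exI[of _ "\<lambda>i. t1 i + t2 i"]) auto
qed

definition hinv :: "nat \<Rightarrow> ((nat \<times> nat) \<Rightarrow> (nat \<times> nat)) \<Rightarrow> ((nat \<times> nat) \<Rightarrow> (nat \<times> nat))" where
  "hinv n \<sigma> = (\<lambda>x. if x \<in> Rn n then inv_into (Rn n) \<sigma> x else x)"

lemma hc_inv:
  assumes s: "\<sigma> \<in> houghton_carrier n"
  shows "hinv n \<sigma> \<in> houghton_carrier n" and "\<sigma> \<circ> hinv n \<sigma> = id"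
proof -
  from s obtain N t where bs: "bij_betw \<sigma> (Rn n) (Rn n)" and os: "\<forall>x. x \<notin> Rn n \<longrightarrow> \<sigma> x = x"
    and es: "\<forall>i<n. \<forall>k. N \<le> k \<and> 1 \<le> k \<longrightarrow> fst (\<sigma> (i, k)) = i \<and> int (snd (\<sigma> (i, k))) = int k + t i"
    unfolding hc_iff by blast
  have inj: "inj_on \<sigma> (Rn n)" using bs bij_betw_def by blast
  have "bij_betw (inv_into (Rn n) \<sigma>) (Rn n) (Rn n)" using bs bij_betw_inv_into by blast
  hence b2: "bij_betw (hinv n \<sigma>) (Rn n) (Rn n)"
    by (rule bij_betw_cong[THEN iffD1, rotated]) (simp add: hinv_def)
  define M where "M = N + (\<Sum>j<n. nat \<bar>t j\<bar>) + 1"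
  have "\<forall>i<n. \<forall>k. M \<le> k \<and> 1 \<le> k \<longrightarrow> fst (hinv n \<sigma> (i, k)) = i \<and> int (snd (hinv n \<sigma> (i, k))) = int k + (- t i)"
  proof (intro allI impI)
    fix i k assume i: "i < n" and k: "M \<le> k \<and> 1 \<le> k"
    have b: "nat \<bar>t i\<bar> \<le> (\<Sum>j<n. nat \<bar>t j\<bar>)" using bound_le_sum i .
    define j where "j = nat (int k - t i)"
    have j: "int j = int k - t i" "N \<le> j" "1 \<le> j" using b k unfolding j_def M_def by linarith+
    obtain a c where ac: "\<sigma> (i,j) = (a,c)" by fastforce
    have "a = i" "int c = int j + t i" using es i j ac by (metis fst_conv snd_conv)+
    hence "\<sigma> (i,j) = (i,k)" using ac j by simp
    hence "inv_into (Rn n) \<sigma> (i,k) = (i,j)" using inj i j by (metis Rn_iff inv_into_f_f)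
    thus "fst (hinv n \<sigma> (i, k)) = i \<and> int (snd (hinv n \<sigma> (i, k))) = int k + (- t i)"
      using i k j by (simp add: hinv_def)
  qed
  moreover have "\<forall>x. x \<notin> Rn n \<longrightarrow> hinv n \<sigma> x = x" by (simp add: hinv_def)
  ultimately show "hinv n \<sigma> \<in> houghton_carrier n" using b2 unfolding hc_iff
    by (intro conjI exI[of _ M] exI[of _ "\<lambda>i. - t i"]) auto
  show "\<sigma> \<circ> hinv n \<sigma> = id"
  proof
    fix x show "(\<sigma> \<circ> hinv n \<sigma>) x = id x"
    proof (cases "x \<in> Rn n")
      case True
      then show ?thesis using bs by (simp add: hinv_def bij_betw_def f_inv_into_f)
    next
      case False
      have "\<sigma> x = x" using os False by blast
      then show ?thesis using False by (simp add: hinv_def)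
    qed
  qed
qed

lemma houghton_group: "group (houghton n)"
proof (rule groupI)
  show "\<one>\<^bsub>houghton n\<^esub> \<in> carrier (houghton n)"
    by (auto simp: houghton_def hc_iff id_def bij_betw_def inj_on_def intro!: exI[of _ 0] exI[of _ "\<lambda>_. 0"])
next
  fix x y assume "x \<in> carrier (houghton n)" "y \<in> carrier (houghton n)"
  thus "x \<otimes>\<^bsub>houghton n\<^esub> y \<in> carrier (houghton n)" by (simp add: houghton_def hc_comp)
next
  fix x y z show "(x \<otimes>\<^bsub>houghton n\<^esub> y) \<otimes>\<^bsub>houghton n\<^esub> z = x \<otimes>\<^bsub>houghton n\<^esub> (y \<otimes>\<^bsub>houghton n\<^esub> z)"
    by (simp add: houghton_def comp_assoc)
next
  fix x show "\<one>\<^bsub>houghton n\<^esub> \<otimes>\<^bsub>houghton n\<^esub> x = x" by (simp add: houghton_def)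
next
  fix x assume "x \<in> carrier (houghton n)"
  hence "hinv n x \<in> carrier (houghton n) \<and> hinv n x \<otimes>\<^bsub>houghton n\<^esub> x = \<one>\<^bsub>houghton n\<^esub>"
    using hc_inv[of x n] by (simp add: houghton_def)
  thus "\<exists>y\<in>carrier (houghton n). y \<otimes>\<^bsub>houghton n\<^esub> x = \<one>\<^bsub>houghton n\<^esub>" by blast
qed




lemma nat_not_inj: fixes f :: "nat \<Rightarrow> 'a" assumes "finite (range f)" shows "\<exists>i j. i < j \<and> f i = f j"
proof -
  have "\<not> inj f" using assms finite_imageD infinite_UNIV_nat by blast
  then obtain i j where "i \<noteq> j" "f i = f j" unfolding inj_def by blast
  thus ?thesis by (metis linorder_neqE_nat)
qed

lemma (in group) fi_pow:
  assumes H: "finite_index G H" and g: "g \<in> carrier G"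
  shows "\<exists>k\<ge>1. g [^] (k::nat) \<in> H"
proof -
  have sg: "subgroup H G" and fin: "finite (rcosets H)" using H unfolding finite_index_def by auto
  have "range (\<lambda>j::nat. H #> g [^] j) \<subseteq> rcosets H"
    using sg g by (auto intro!: rcosetsI subgroup.subset)
  hence "finite (range (\<lambda>j::nat. H #> g [^] j))" using fin finite_subset by blast
  then obtain i j :: nat where ij: "i < j" "H #> g [^] i = H #> g [^] j" using nat_not_inj by blast
  have "g [^] j \<in> H #> g [^] j" using rcos_self[of "g [^] j" H] sg g by blast
  hence "g [^] j \<in> H #> g [^] i" unfolding ij(2) .
  hence "\<exists>h\<in>H. g [^] j = h \<otimes> g [^] i" unfolding r_coset_def by simp
  then obtain h where h: "h \<in> H" "g [^] j = h \<otimes> g [^] i" by (elim bexE)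
  have hc: "h \<in> carrier G" using h(1) sg by (rule subgroup.mem_carrier[rotated])
  have "g [^] j = g [^] (j - i) \<otimes> g [^] i" using nat_pow_mult[OF g, of "j-i" i] ij by simp
  hence "g [^] (j - i) = h" using h hc g by (metis nat_pow_closed right_cancel)
  thus ?thesis using h ij by (intro exI[of _ "j - i"]) auto
qed

lemma (in group) fi_Int:
  assumes A: "finite_index G A" and B: "finite_index G B"
  shows "finite_index G (A \<inter> B)"
proof -
  have sA: "subgroup A G" and fA: "finite (rcosets A)" using A unfolding finite_index_def by auto
  have sB: "subgroup B G" and fB: "finite (rcosets B)" using B unfolding finite_index_def by auto
  have "rcosets (A \<inter> B) \<subseteq> (\<lambda>(U,V). U \<inter> V) ` ((rcosets A) \<times> (rcosets B))"
  proof
    fix Z assume "Z \<in> rcosets (A \<inter> B)"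
    then obtain g where g: "g \<in> carrier G" "Z = (A \<inter> B) #> g" unfolding RCOSETS_def by blast
    have "(A \<inter> B) #> g = (A #> g) \<inter> (B #> g)"
    proof
      show "(A \<inter> B) #> g \<subseteq> (A #> g) \<inter> (B #> g)" unfolding r_coset_def by blast
      show "(A #> g) \<inter> (B #> g) \<subseteq> (A \<inter> B) #> g"
      proof
        fix x assume "x \<in> (A #> g) \<inter> (B #> g)"
        then obtain a b where ab: "a \<in> A" "b \<in> B" "x = a \<otimes> g" "x = b \<otimes> g" unfolding r_coset_def by blast
        have "a \<in> carrier G" using ab(1) sA by (rule subgroup.mem_carrier[rotated])
        moreover have "b \<in> carrier G" using ab(2) sB by (rule subgroup.mem_carrier[rotated])
        ultimately have "a = b" using ab g right_cancel by metis
        thus "x \<in> (A \<inter> B) #> g" using ab unfolding r_coset_def by blast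
      qed
    qed
    moreover have "A #> g \<in> rcosets A" "B #> g \<in> rcosets B"
      using g sA sB by (auto intro!: rcosetsI subgroup.subset)
    ultimately show "Z \<in> (\<lambda>(U,V). U \<inter> V) ` ((rcosets A) \<times> (rcosets B))" using g by force
  qed
  moreover have "finite ((\<lambda>(U,V). U \<inter> V) ` ((rcosets A) \<times> (rcosets B)))" using fA fB by simp
  ultimately have fin: "finite (rcosets (A \<inter> B))" using finite_subset by blast
  have sg: "subgroup (A \<inter> B) G" by (rule subgroups_Inter_pair[OF sA sB])
  show ?thesis unfolding finite_index_def using sg fin by (rule conjI)
qed

lemma (in monoid) foldr_mult:
  "set xs \<subseteq> carrier G \<Longrightarrow> a \<in> carrier G \<Longrightarrow>
     foldr (\<otimes>) xs \<one> \<in> carrier G \<and> foldr (\<otimes>) xs a = foldr (\<otimes>) xs \<one> \<otimes> a"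
  by (induction xs) (auto simp: m_assoc)

lemma (in group) word_exists:
  assumes S: "S \<subseteq> carrier G" and x: "x \<in> generate G S"
  shows "\<exists>xs. set xs \<subseteq> S \<union> m_inv G ` S \<and> foldr (\<otimes>) xs \<one> = x"
  using x
proof (induction rule: generate.induct)
  case one thus ?case by (intro exI[of _ "[]"]) simp
next
  case (incl h) thus ?case by (intro exI[of _ "[h]"]) (use S in auto)
next
  case (inv h) thus ?case by (intro exI[of _ "[inv h]"]) (use S in auto)
next
  case (eng h1 h2)
  then obtain xs ys where xs: "set xs \<subseteq> S \<union> m_inv G ` S" "foldr (\<otimes>) xs \<one> = h1"
    and ys: "set ys \<subseteq> S \<union> m_inv G ` S" "foldr (\<otimes>) ys \<one> = h2" by blast
  have T: "S \<union> m_inv G ` S \<subseteq> carrier G" using S by auto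
  have "foldr (\<otimes>) (xs @ ys) \<one> = foldr (\<otimes>) xs (foldr (\<otimes>) ys \<one>)" by simp
  also have "\<dots> = h1 \<otimes> h2" using foldr_mult[of xs "foldr (\<otimes>) ys \<one>"] foldr_mult[of ys \<one>] xs ys T by auto
  finally show ?case using xs ys by (intro exI[of _ "xs @ ys"]) auto
qed

locale hgen = group G for G (structure) +
  fixes S assumes S: "S \<subseteq> carrier G" and gen: "generate G S = carrier G"
begin

lemma word_len_ex:
  assumes x: "x \<in> carrier G"
  shows "\<exists>xs. length xs = word_len G S x \<and> set xs \<subseteq> S \<union> m_inv G ` S \<and> foldr (\<otimes>) xs \<one> = x"
proof -
  have "\<exists>k xs. length xs = k \<and> set xs \<subseteq> S \<union> m_inv G ` S \<and> foldr (\<otimes>) xs \<one> = x"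
    using word_exists[OF S, of x] x gen by auto
  then show ?thesis unfolding word_len_def by (rule LeastI_ex)
qed

lemma word_len_zero: "x \<in> carrier G \<Longrightarrow> word_len G S x = 0 \<Longrightarrow> x = \<one>"
  using word_len_ex by fastforce

lemma word_len_one: "word_len G S \<one> = 0"
  unfolding word_len_def by (rule Least_eq_0) (intro exI[of _ "[]"], simp)

lemma ball_finite:
  assumes "finite S"
  shows "finite {x \<in> carrier G. word_len G S x \<le> K}"
proof -
  have "{x \<in> carrier G. word_len G S x \<le> K} \<subseteq>
     (\<lambda>xs. foldr (\<otimes>) xs \<one>) ` {xs. set xs \<subseteq> S \<union> m_inv G ` S \<and> length xs \<le> K}"
  proof
    fix x assume "x \<in> {x \<in> carrier G. word_len G S x \<le> K}"
    then show "x \<in> (\<lambda>xs. foldr (\<otimes>) xs \<one>) ` {xs. set xs \<subseteq> S \<union> m_inv G ` S \<and> length xs \<le> K}"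
      using word_len_ex[of x] by force
  qed
  moreover have "finite {xs. set xs \<subseteq> S \<union> m_inv G ` S \<and> length xs \<le> K}"
    using assms by (intro finite_lists_length_le) auto
  ultimately show ?thesis using finite_subset by blast
qed

lemma nearest_self:
  assumes A: "subgroup A G" and g: "g \<in> A"
  shows "nearest G S A g = g"
proof -
  have gc: "g \<in> carrier G" using g A by (rule subgroup.mem_carrier[rotated])
  have d0: "word_dist G S g g = 0" unfolding word_dist_def using gc word_len_one by simp
  have "\<exists>a. a \<in> A \<and> (\<forall>b\<in>A. word_dist G S g a \<le> word_dist G S g b)"
    using g d0 by (intro exI[of _ g]) auto
  hence P: "nearest G S A g \<in> A \<and> (\<forall>b\<in>A. word_dist G S g (nearest G S A g) \<le> word_dist G S g b)"
    unfolding nearest_def by (rule someI_ex)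
  define a where "a = nearest G S A g"
  have "a \<in> A" using P a_def by blast
  hence ac: "a \<in> carrier G" using A by (rule subgroup.mem_carrier[rotated])
  have "word_dist G S g a = 0" using P g d0 a_def by fastforce
  hence "inv g \<otimes> a = \<one>" using word_len_zero gc ac unfolding word_dist_def by simp
  hence "inv a = inv g" using gc ac by (intro inv_equality) auto
  hence "inv (inv a) = inv (inv g)" by simp
  hence "a = g" using gc ac by simp
  thus ?thesis using a_def by simp
qed

end



context group begin

lemma cancel1 [simp]: "s \<in> carrier G \<Longrightarrow> z \<in> carrier G \<Longrightarrow> s \<otimes> (inv s \<otimes> z) = z"
  by (simp add: m_assoc[symmetric])
lemma cancel2 [simp]: "s \<in> carrier G \<Longrightarrow> z \<in> carrier G \<Longrightarrow> inv s \<otimes> (s \<otimes> z) = z"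
  by (simp add: m_assoc[symmetric])

lemma conj_pow:
  assumes "s \<in> carrier G" "y \<in> carrier G"
  shows "(inv s \<otimes> y \<otimes> s) [^] (k::nat) = inv s \<otimes> y [^] k \<otimes> s"
  using assms by (induction k) (simp_all add: m_assoc)

lemma sub_pow: "subgroup H G \<Longrightarrow> h \<in> H \<Longrightarrow> h [^] (k::nat) \<in> H"
  by (induction k) (simp_all add: subgroup.one_closed subgroup.m_closed)

lemma Q_conj:
  assumes Q: "\<forall>y\<in>carrier G. \<exists>k\<ge>(1::nat). y [^] k \<otimes> x = x \<otimes> y [^] k"
    and x: "x \<in> carrier G" and s: "s \<in> carrier G"
  shows "\<forall>y\<in>carrier G. \<exists>k\<ge>(1::nat). y [^] k \<otimes> (s \<otimes> x \<otimes> inv s) = (s \<otimes> x \<otimes> inv s) \<otimes> y [^] k"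
proof
  fix y assume y: "y \<in> carrier G"
  have "inv s \<otimes> y \<otimes> s \<in> carrier G" using y s by simp
  then obtain k :: nat where k: "k \<ge> 1" "(inv s \<otimes> y \<otimes> s) [^] k \<otimes> x = x \<otimes> (inv s \<otimes> y \<otimes> s) [^] k"
    using Q by blast
  define Y where "Y = y [^] k"
  have Yc: "Y \<in> carrier G" using y Y_def by simp
  have e: "inv s \<otimes> Y \<otimes> s \<otimes> x = x \<otimes> (inv s \<otimes> Y \<otimes> s)" using k(2) conj_pow[OF s y] Y_def by simp
  have "s \<otimes> (inv s \<otimes> Y \<otimes> s \<otimes> x) \<otimes> inv s = s \<otimes> (x \<otimes> (inv s \<otimes> Y \<otimes> s)) \<otimes> inv s"
    by (simp only: e)
  hence "Y \<otimes> (s \<otimes> x \<otimes> inv s) = (s \<otimes> x \<otimes> inv s) \<otimes> Y" using Yc s x by (simp add: m_assoc)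
  thus "\<exists>k\<ge>(1::nat). y [^] k \<otimes> (s \<otimes> x \<otimes> inv s) = (s \<otimes> x \<otimes> inv s) \<otimes> y [^] k"
    using k(1) Y_def by blast
qed

lemma e_ident:
  assumes "a \<in> carrier G" "b \<in> carrier G" "c \<in> carrier G" "d \<in> carrier G"
  shows "inv b \<otimes> (inv a \<otimes> c) \<otimes> b = inv (a \<otimes> b) \<otimes> (c \<otimes> d) \<otimes> inv (inv b \<otimes> d)"
  using assms by (simp add: inv_mult_group m_assoc)

lemma conj_eq_comm:
  assumes x: "x \<in> carrier G" and u: "u \<in> carrier G" and il: "i < l"
    and eq: "inv (u [^] i) \<otimes> x \<otimes> u [^] i = inv (u [^] l) \<otimes> x \<otimes> u [^] (l::nat)"
  shows "u [^] (l - i) \<otimes> x = x \<otimes> u [^] (l - i)"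
proof -
  define P where "P = u [^] i"
  define D where "D = u [^] (l - i)"
  have Pc: "P \<in> carrier G" and Dc: "D \<in> carrier G" using u P_def D_def by auto
  have "u [^] l = D \<otimes> P" using nat_pow_mult[OF u, of "l-i" i] il P_def D_def by simp
  hence eq2: "inv P \<otimes> x \<otimes> P = inv (D \<otimes> P) \<otimes> x \<otimes> (D \<otimes> P)" using eq P_def by simp
  have "P \<otimes> (inv P \<otimes> x \<otimes> P) \<otimes> inv P = P \<otimes> (inv (D \<otimes> P) \<otimes> x \<otimes> (D \<otimes> P)) \<otimes> inv P"
    by (simp only: eq2)
  hence "x = inv D \<otimes> (x \<otimes> D)" using Pc Dc x by (simp add: m_assoc inv_mult_group)
  hence "D \<otimes> x = D \<otimes> (inv D \<otimes> (x \<otimes> D))" by simp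
  also have "\<dots> = x \<otimes> D" using Dc x by simp
  finally show ?thesis using D_def by simp
qed

end



lemma h_mult[simp]: "x \<otimes>\<^bsub>houghton n\<^esub> y = y \<circ> x" by (simp add: houghton_def)
lemma h_one[simp]: "\<one>\<^bsub>houghton n\<^esub> = id" by (simp add: houghton_def)
lemma h_carrier[simp]: "carrier (houghton n) = houghton_carrier n" by (simp add: houghton_def)
lemma h_pow: "x [^]\<^bsub>houghton n\<^esub> (k::nat) = x ^^ k"
  by (induction k) simp_all

lemma h_inv:
  assumes "\<sigma> \<in> houghton_carrier n"
  shows "m_inv (houghton n) \<sigma> (\<sigma> z) = z" "\<sigma> (m_inv (houghton n) \<sigma> z) = z"
proof -
  interpret group "houghton n" by (rule houghton_group)
  have "\<sigma> \<otimes>\<^bsub>houghton n\<^esub> m_inv (houghton n) \<sigma> = \<one>\<^bsub>houghton n\<^esub>" by (rule r_inv) (simp add: assms)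
  hence "m_inv (houghton n) \<sigma> \<circ> \<sigma> = id" by simp
  thus "m_inv (houghton n) \<sigma> (\<sigma> z) = z" by (metis comp_apply id_apply)
  have "m_inv (houghton n) \<sigma> \<otimes>\<^bsub>houghton n\<^esub> \<sigma> = \<one>\<^bsub>houghton n\<^esub>" by (rule l_inv) (simp add: assms)
  hence "\<sigma> \<circ> m_inv (houghton n) \<sigma> = id" by simp
  thus "\<sigma> (m_inv (houghton n) \<sigma> z) = z" by (metis comp_apply id_apply)
qed

definition sw :: "(nat \<times> nat) \<Rightarrow> (nat \<times> nat) \<Rightarrow> (nat \<times> nat) \<Rightarrow> (nat \<times> nat)" where
  "sw a b = (\<lambda>z. if z = a then b else if z = b then a else z)"

lemma sw_carrier:
  assumes a: "a \<in> Rn n" and b: "b \<in> Rn n"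
  shows "sw a b \<in> houghton_carrier n"
proof -
  have bij: "bij_betw (sw a b) (Rn n) (Rn n)"
    by (rule bij_betw_byWitness[where f'="sw a b"]) (use a b in \<open>auto simp: sw_def\<close>)
  have out: "\<forall>x. x \<notin> Rn n \<longrightarrow> sw a b x = x" using a b by (auto simp: sw_def)
  have ev: "\<forall>i<n. \<forall>k. snd a + snd b + 1 \<le> k \<and> 1 \<le> k \<longrightarrow>
              fst (sw a b (i, k)) = i \<and> int (snd (sw a b (i, k))) = int k + 0"
    by (auto simp: sw_def)
  show ?thesis unfolding hc_iff
    by (intro conjI bij out exI[of _ "snd a + snd b + 1"] exI[of _ "\<lambda>_. 0"]) (use ev in simp)
qed

lemma sw_apply: "sw a b a = b" "sw a b b = a" "z \<noteq> a \<Longrightarrow> z \<noteq> b \<Longrightarrow> sw a b z = z"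
  by (auto simp: sw_def)

definition t2 :: "(nat \<times> nat) \<Rightarrow> (nat \<times> nat)" where
  "t2 = (\<lambda>(i,k). if i = 0 \<and> 2 \<le> k then (0, k+1) else if i = 1 \<and> 2 \<le> k then (1, k-1)
           else if i = 1 \<and> k = 1 then (0,2) else (i,k))"

definition t2i :: "(nat \<times> nat) \<Rightarrow> (nat \<times> nat)" where
  "t2i = (\<lambda>(i,k). if i = 0 \<and> 3 \<le> k then (0, k-1) else if i = 0 \<and> k = 2 then (1, 1)
           else if i = 1 \<and> 1 \<le> k then (1,k+1) else (i,k))"

lemma t2_carrier:
  assumes n: "2 \<le> n"
  shows "t2 \<in> houghton_carrier n"
proof -
  have bij: "bij_betw t2 (Rn n) (Rn n)"
    by (rule bij_betw_byWitness[where f'="t2i"]) (use n in \<open>auto simp: t2_def t2i_def Rn_def split: if_splits\<close>)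
  have out: "\<forall>x. x \<notin> Rn n \<longrightarrow> t2 x = x" using n by (auto simp: t2_def Rn_def)
  have ev: "\<forall>i<n. \<forall>k. 2 \<le> k \<and> 1 \<le> k \<longrightarrow>
              fst (t2 (i, k)) = i \<and> int (snd (t2 (i, k))) = int k + (if i = 0 then 1 else if i = 1 then -1 else 0)"
    by (auto simp: t2_def)
  show ?thesis unfolding hc_iff
    by (intro conjI bij out exI[of _ "2"] exI[of _ "\<lambda>i. if i = 0 then 1 else if i = 1 then -1 else (0::int)"]) (use ev in simp)
qed

lemma t2_fix: "(t2 ^^ k) (0,1) = (0,1)"
  by (induction k) (simp_all add: t2_def)

lemma t2_shift: "2 \<le> j \<Longrightarrow> (t2 ^^ k) (0,j) = (0, j + k)"
  by (induction k) (simp_all add: t2_def)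

lemma hough_fc:
  assumes n: "2 \<le> n" and x: "x \<in> carrier (houghton n)"
    and Q: "\<forall>y\<in>carrier (houghton n). \<exists>k\<ge>(1::nat). y [^]\<^bsub>houghton n\<^esub> k \<otimes>\<^bsub>houghton n\<^esub> x = x \<otimes>\<^bsub>houghton n\<^esub> y [^]\<^bsub>houghton n\<^esub> k"
  shows "x = \<one>\<^bsub>houghton n\<^esub>"
proof (rule ccontr)
  interpret group "houghton n" by (rule houghton_group)
  assume "x \<noteq> \<one>\<^bsub>houghton n\<^esub>"
  then obtain p where px: "x p \<noteq> p" by (auto simp: fun_eq_iff)
  have xc: "x \<in> houghton_carrier n" using x by simp
  hence xb: "bij_betw x (Rn n) (Rn n)" and xo: "\<forall>z. z \<notin> Rn n \<longrightarrow> x z = z" unfolding hc_iff by blast+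
  have pR: "p \<in> Rn n" using xo px by blast
  define q where "q = x p"
  have qR: "q \<in> Rn n" using xb pR q_def bij_betwE by blast
  have pq: "p \<noteq> q" using px q_def by simp
  have R01: "(0,1) \<in> Rn n" and R02: "(0,2) \<in> Rn n" using n by auto
  define \<tau>1 where "\<tau>1 = sw (0,1) p"
  define q1 where "q1 = \<tau>1 q"
  have t1c: "\<tau>1 \<in> houghton_carrier n" using sw_carrier[OF R01 pR] \<tau>1_def by simp
  have q1R: "q1 \<in> Rn n" using t1c qR q1_def unfolding hc_iff by (metis bij_betwE)
  define \<tau>2 where "\<tau>2 = sw (0,2) q1"
  have t2c: "\<tau>2 \<in> houghton_carrier n" using sw_carrier[OF R02 q1R] \<tau>2_def by simp
  define \<sigma> where "\<sigma> = \<tau>1 \<circ> \<tau>2"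
  have sc: "\<sigma> \<in> houghton_carrier n" using hc_comp[OF t2c t1c] \<sigma>_def by simp
  have q1ne: "q1 \<noteq> (0,1)"
  proof
    assume "q1 = (0,1)"
    hence "\<tau>1 q = (0,1)" using q1_def by simp
    hence "q = p" unfolding \<tau>1_def sw_def by (auto split: if_splits)
    thus False using pq by simp
  qed
  have s1: "\<sigma> (0,1) = p"
    using q1ne by (simp add: \<sigma>_def \<tau>2_def \<tau>1_def sw_def)
  have "\<tau>1 q1 = q" unfolding q1_def \<tau>1_def sw_def by auto
  hence s2: "\<sigma> (0,2) = q" by (simp add: \<sigma>_def \<tau>2_def sw_def)
  define x' where "x' = \<sigma> \<otimes>\<^bsub>houghton n\<^esub> x \<otimes>\<^bsub>houghton n\<^esub> m_inv (houghton n) \<sigma>"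
  have Q': "\<forall>y\<in>carrier (houghton n). \<exists>k\<ge>(1::nat). y [^]\<^bsub>houghton n\<^esub> k \<otimes>\<^bsub>houghton n\<^esub> x' = x' \<otimes>\<^bsub>houghton n\<^esub> y [^]\<^bsub>houghton n\<^esub> k"
    unfolding x'_def by (rule Q_conj[OF Q x]) (use sc in simp)
  have t2C: "t2 \<in> carrier (houghton n)" using t2_carrier[OF n] by simp
  obtain k :: nat where k: "k \<ge> 1" "t2 [^]\<^bsub>houghton n\<^esub> k \<otimes>\<^bsub>houghton n\<^esub> x' = x' \<otimes>\<^bsub>houghton n\<^esub> t2 [^]\<^bsub>houghton n\<^esub> k"
    using Q' t2C by blast
  hence "x' \<circ> t2 ^^ k = t2 ^^ k \<circ> x'" by (simp add: h_pow)
  hence E: "x' ((t2 ^^ k) (0,1)) = (t2 ^^ k) (x' (0,1))" by (metis comp_apply)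
  have x'01: "x' (0,1) = (0,2)"
  proof -
    have "x' (0,1) = m_inv (houghton n) \<sigma> (x (\<sigma> (0,1)))" by (simp add: x'_def)
    also have "\<dots> = m_inv (houghton n) \<sigma> (\<sigma> (0,2))" using s1 s2 q_def by simp
    also have "\<dots> = (0,2)" using h_inv(1)[OF sc] by simp
    finally show ?thesis .
  qed
  have "(0,2) = (0, 2 + k)" using E x'01 t2_fix t2_shift[of 2 k] by simp
  thus False using k by simp
qed




lemma (in hgen) main_abs:
  assumes finS: "finite S"
    and FC: "\<And>x. x \<in> carrier G \<Longrightarrow> (\<forall>y\<in>carrier G. \<exists>k\<ge>(1::nat). y [^] k \<otimes> x = x \<otimes> y [^] k) \<Longrightarrow> x = \<one>"
    and c1: "commensuration G A B \<phi>" and c2: "commensuration G A' B' \<psi>"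
    and bd: "bounded_distance G S (comm_qi G S A \<phi>) (comm_qi G S A' \<psi>)"
  shows "comm_equiv G A \<phi> A' \<psi>"
proof -
  have fA: "finite_index G A" and fB: "finite_index G B" and fA': "finite_index G A'"
    using c1 c2 unfolding commensuration_def by auto
  have sA: "subgroup A G" and sB: "subgroup B G" and sA': "subgroup A' G" and sB': "subgroup B' G"
    using c1 c2 unfolding commensuration_def finite_index_def by auto
  have ph: "\<forall>a\<in>A. \<forall>b\<in>A. \<phi> (a \<otimes> b) = \<phi> a \<otimes> \<phi> b" and pbij: "bij_betw \<phi> A B"
    using c1 unfolding commensuration_def iso_def hom_def by auto
  have qh: "\<forall>a\<in>A'. \<forall>b\<in>A'. \<psi> (a \<otimes> b) = \<psi> a \<otimes> \<psi> b" and qbij: "bij_betw \<psi> A' B'"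
    using c2 unfolding commensuration_def iso_def hom_def by auto
  have pB: "\<And>g. g \<in> A \<Longrightarrow> \<phi> g \<in> B" using pbij bij_betwE by blast
  have qB: "\<And>g. g \<in> A' \<Longrightarrow> \<psi> g \<in> B'" using qbij bij_betwE by blast
  have pc: "\<And>g. g \<in> A \<Longrightarrow> \<phi> g \<in> carrier G"
  proof -
    fix g assume "g \<in> A" hence "\<phi> g \<in> B" by (rule pB)
    thus "\<phi> g \<in> carrier G" using sB by (rule subgroup.mem_carrier[rotated])
  qed
  have qc: "\<And>g. g \<in> A' \<Longrightarrow> \<psi> g \<in> carrier G"
  proof -
    fix g assume "g \<in> A'" hence "\<psi> g \<in> B'" by (rule qB)
    thus "\<psi> g \<in> carrier G" using sB' by (rule subgroup.mem_carrier[rotated])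
  qed
  have Ac: "\<And>g. g \<in> A \<Longrightarrow> g \<in> carrier G"
  proof -
    fix g assume "g \<in> A" thus "g \<in> carrier G" using sA by (rule subgroup.mem_carrier[rotated])
  qed
  define C where "C = A \<inter> A'"
  have fC: "finite_index G C" unfolding C_def by (rule fi_Int[OF fA fA'])
  have sC: "subgroup C G" using fC unfolding finite_index_def by simp
  obtain K where K: "\<forall>g\<in>carrier G. word_dist G S (comm_qi G S A \<phi> g) (comm_qi G S A' \<psi> g) \<le> K"
    using bd unfolding bounded_distance_def by blast
  define e where "e g = inv (\<phi> g) \<otimes> \<psi> g" for g
  define F where "F = {x \<in> carrier G. word_len G S x \<le> K}"
  have finF: "finite F" unfolding F_def by (rule ball_finite[OF finS])
  have eF: "\<And>g. g \<in> C \<Longrightarrow> e g \<in> F"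
  proof -
    fix g assume g: "g \<in> C"
    hence gA: "g \<in> A" and gA': "g \<in> A'" by (auto simp: C_def)
    have "comm_qi G S A \<phi> g = \<phi> g" unfolding comm_qi_def using nearest_self[OF sA gA] by simp
    moreover have "comm_qi G S A' \<psi> g = \<psi> g" unfolding comm_qi_def using nearest_self[OF sA' gA'] by simp
    ultimately have "word_len G S (e g) \<le> K" using K Ac[OF gA] unfolding word_dist_def e_def by metis
    moreover have "e g \<in> carrier G" unfolding e_def using pc[OF gA] qc[OF gA'] by simp
    ultimately show "e g \<in> F" unfolding F_def by simp
  qed
  have p1: "\<phi> \<one> = \<one>"
  proof -
    have o: "\<one> \<in> A" using sA by (rule subgroup.one_closed)
    have "\<phi> \<one> \<otimes> \<phi> \<one> = \<phi> \<one>" using ph o by (metis l_one one_closed)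
    thus ?thesis using pc[OF o] l_cancel_one by blast
  qed
  have ppow: "\<And>z m. z \<in> A \<Longrightarrow> \<phi> (z [^] (m::nat)) = \<phi> z [^] m"
  proof -
    fix z m assume z: "z \<in> A"
    show "\<phi> (z [^] (m::nat)) = \<phi> z [^] m"
    proof (induction m)
      case 0 thus ?case using p1 by simp
    next
      case (Suc m)
      have "\<phi> (z [^] Suc m) = \<phi> (z [^] m \<otimes> z)" by simp
      also have "\<dots> = \<phi> (z [^] m) \<otimes> \<phi> z" using ph sub_pow[OF sA z] z by blast
      finally show ?case using Suc by simp
    qed
  qed
  define F2 where "F2 = (\<lambda>(p,q). p \<otimes> inv q) ` (F \<times> F)"
  have finF2: "finite F2" unfolding F2_def using finF by simp
  have ident: "\<And>g h. g \<in> C \<Longrightarrow> h \<in> C \<Longrightarrow> inv (\<phi> h) \<otimes> e g \<otimes> \<phi> h \<in> F2"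
  proof -
    fix g h assume g: "g \<in> C" and h: "h \<in> C"
    have gA: "g \<in> A" "g \<in> A'" and hA: "h \<in> A" "h \<in> A'" using g h by (auto simp: C_def)
    have gh: "g \<otimes> h \<in> C" by (rule subgroup.m_closed[OF sC g h])
    have "inv (\<phi> h) \<otimes> e g \<otimes> \<phi> h = inv (\<phi> g \<otimes> \<phi> h) \<otimes> (\<psi> g \<otimes> \<psi> h) \<otimes> inv (inv (\<phi> h) \<otimes> \<psi> h)"
      unfolding e_def by (rule e_ident) (use pc qc gA hA in auto)
    also have "\<dots> = e (g \<otimes> h) \<otimes> inv (e h)" unfolding e_def using ph qh gA hA by simp
    finally show "inv (\<phi> h) \<otimes> e g \<otimes> \<phi> h \<in> F2" unfolding F2_def using eF[OF gh] eF[OF h] by force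
  qed
  have Qe: "\<And>g. g \<in> C \<Longrightarrow> \<forall>y\<in>carrier G. \<exists>k\<ge>(1::nat). y [^] k \<otimes> e g = e g \<otimes> y [^] k"
  proof (intro ballI)
    fix g y assume g: "g \<in> C" and y: "y \<in> carrier G"
    have egc: "e g \<in> carrier G" using eF[OF g] unfolding F_def by simp
    obtain a :: nat where a: "a \<ge> 1" "y [^] a \<in> B" using fi_pow[OF fB y] by blast
    have "y [^] a \<in> \<phi> ` A" using a(2) pbij unfolding bij_betw_def by simp
    then obtain z where z: "z \<in> A" "\<phi> z = y [^] a" by (metis imageE)
    obtain b :: nat where b: "b \<ge> 1" "z [^] b \<in> C" using fi_pow[OF fC Ac[OF z(1)]] by blast
    define w where "w = z [^] b"
    have wC: "w \<in> C" and wA: "w \<in> A" using b w_def by (auto simp: C_def)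
    define u where "u = \<phi> w"
    have u: "u = y [^] (a * b)" unfolding u_def w_def using ppow[OF z(1)] z(2) nat_pow_pow[OF y] by simp
    have uc: "u \<in> carrier G" using u y by simp
    define f where "f j = inv (u [^] j) \<otimes> e g \<otimes> u [^] j" for j :: nat
    have "range f \<subseteq> F2"
    proof
      fix v assume "v \<in> range f"
      then obtain j where j: "v = f j" by blast
      have wj: "w [^] j \<in> C" using sC wC by (rule sub_pow)
      have "\<phi> (w [^] j) = u [^] j" unfolding u_def using ppow[OF wA] by simp
      thus "v \<in> F2" using ident[OF g wj] j f_def by simp
    qed
    hence "finite (range f)" using finF2 finite_subset by blast
    then obtain i l where il: "i < l" "f i = f l" using nat_not_inj by blast
    have c: "u [^] (l - i) \<otimes> e g = e g \<otimes> u [^] (l - i)"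
      by (rule conj_eq_comm[OF egc uc il(1)]) (use il(2) f_def in simp)
    have "u [^] (l - i) = y [^] (a * b * (l - i))" using u nat_pow_pow[OF y] by simp
    moreover have "a * b * (l - i) \<ge> 1" using a b il by simp
    ultimately show "\<exists>k\<ge>(1::nat). y [^] k \<otimes> e g = e g \<otimes> y [^] k" using c by metis
  qed
  have eq: "\<forall>g\<in>C. \<phi> g = \<psi> g"
  proof
    fix g assume g: "g \<in> C"
    have gA: "g \<in> A" "g \<in> A'" using g by (auto simp: C_def)
    have egc: "e g \<in> carrier G" using eF[OF g] unfolding F_def by simp
    have "e g = \<one>" by (rule FC[OF egc Qe[OF g]])
    hence "\<phi> g \<otimes> e g = \<phi> g" using pc[OF gA(1)] by simp
    thus "\<phi> g = \<psi> g" unfolding e_def using pc[OF gA(1)] qc[OF gA(2)] by simp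
  qed
  show ?thesis unfolding comm_equiv_def
    by (intro exI[of _ C] conjI fC eq) (auto simp: C_def)
qed



theorem mainTheorem9:
  fixes n :: nat and S :: "((nat \<times> nat) \<Rightarrow> (nat \<times> nat)) set"
    and A B A' B' :: "((nat \<times> nat) \<Rightarrow> (nat \<times> nat)) set"
    and \<phi> \<psi> :: "((nat \<times> nat) \<Rightarrow> (nat \<times> nat)) \<Rightarrow> ((nat \<times> nat) \<Rightarrow> (nat \<times> nat))"
  assumes "n \<ge> 2"
    and "finite S" and "S \<subseteq> carrier (houghton n)"
    and "generate (houghton n) S = carrier (houghton n)"
    and "commensuration (houghton n) A B \<phi>"
    and "commensuration (houghton n) A' B' \<psi>"
    and "bounded_distance (houghton n) S (comm_qi (houghton n) S A \<phi>) (comm_qi (houghton n) S A' \<psi>)"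
  shows "comm_equiv (houghton n) A \<phi> A' \<psi>"
proof -
  have H: "hgen (houghton n) S" unfolding hgen_def hgen_axioms_def
    using houghton_group assms(3,4) by blast
  show ?thesis
    by (rule hgen.main_abs[OF H assms(2) hough_fc[OF assms(1)] assms(5,6,7)])
qed

end
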